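(* Let $n\ge 3$ and $1\le k\le n-2$. Then $rc^*(C_n([k]))=src^*(C_n([k]))=\lceil n/k\rceil$, where $[k]=\{1,2,\dots,k\}$.
   Context: For $n\ge 2$ and $S\subseteq\{1,\dots,n-1\}$, the circulant digraph $C_n(S)$ has vertex set $\{v_0,\dots,v_{n-1}\}$ and arcs $v_iv_j$ for all $i,j$ with $j-i\equiv s \pmod n$ for some $s\in S$. For a strongly connected digraph $D$ and an arc-colouring $\Gamma:A(D)\to\{1,\dots,k\}$, a directed path is rainbow if its arcs have pairwise distinct colours. $\Gamma$ is rainbow connected if for every ordered pair of distinct vertices $x,y$ there is a rainbow directed $xy$-path; $rc^*(D)$ is the minimum number of colours of such a colouring. $\Gamma$ is strongly rainbow connected if for every ordered pair of distinct vertices $x,y$ there is a rainbow directed $xy$-path of length $d_D(x,y)$; $src^*(D)$ is the minimum such number. *)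

theory Defs
  imports Complex_Main
begin

definition circulant_verts :: "nat \<Rightarrow> nat set" where
  "circulant_verts n = {0..<n}"

definition circulant_arcs :: "nat \<Rightarrow> nat set \<Rightarrow> (nat \<times> nat) set" where
  "circulant_arcs n S = {(i, j). i < n \<and> j < n \<and> (\<exists>s\<in>S. (int j - int i) mod int n = int s mod int n)}"

definition path_arcs :: "'a list \<Rightarrow> ('a \<times> 'a) list" where
  "path_arcs p = zip p (tl p)"

definition is_dipath :: "'a set \<Rightarrow> ('a \<times> 'a) set \<Rightarrow> 'a list \<Rightarrow> 'a \<Rightarrow> 'a \<Rightarrow> bool" where
  "is_dipath V A p x y \<longleftrightarrow> p \<noteq> [] \<and> hd p = x \<and> last p = y \<and> distinct p \<and>
     set p \<subseteq> V \<and> set (path_arcs p) \<subseteq> A"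

definition path_len :: "'a list \<Rightarrow> nat" where
  "path_len p = length p - 1"

definition didist :: "'a set \<Rightarrow> ('a \<times> 'a) set \<Rightarrow> 'a \<Rightarrow> 'a \<Rightarrow> nat" where
  "didist V A x y = (LEAST l. \<exists>p. is_dipath V A p x y \<and> path_len p = l)"

definition rainbow :: "('a \<times> 'a \<Rightarrow> nat) \<Rightarrow> 'a list \<Rightarrow> bool" where
  "rainbow c p \<longleftrightarrow> distinct (map c (path_arcs p))"

definition arc_colouring :: "('a \<times> 'a) set \<Rightarrow> nat \<Rightarrow> ('a \<times> 'a \<Rightarrow> nat) \<Rightarrow> bool" where
  "arc_colouring A k c \<longleftrightarrow> (\<forall>e\<in>A. c e \<in> {1..k})"

definition rainbow_connected :: "'a set \<Rightarrow> ('a \<times> 'a) set \<Rightarrow> ('a \<times> 'a \<Rightarrow> nat) \<Rightarrow> bool" where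
  "rainbow_connected V A c \<longleftrightarrow>
     (\<forall>x\<in>V. \<forall>y\<in>V. x \<noteq> y \<longrightarrow> (\<exists>p. is_dipath V A p x y \<and> rainbow c p))"

definition strongly_rainbow_connected :: "'a set \<Rightarrow> ('a \<times> 'a) set \<Rightarrow> ('a \<times> 'a \<Rightarrow> nat) \<Rightarrow> bool" where
  "strongly_rainbow_connected V A c \<longleftrightarrow>
     (\<forall>x\<in>V. \<forall>y\<in>V. x \<noteq> y \<longrightarrow>
        (\<exists>p. is_dipath V A p x y \<and> path_len p = didist V A x y \<and> rainbow c p))"

definition rc_star :: "'a set \<Rightarrow> ('a \<times> 'a) set \<Rightarrow> nat" where
  "rc_star V A = (LEAST k. \<exists>c. arc_colouring A k c \<and> rainbow_connected V A c)"

definition src_star :: "'a set \<Rightarrow> ('a \<times> 'a) set \<Rightarrow> nat" where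
  "src_star V A = (LEAST k. \<exists>c. arc_colouring A k c \<and> strongly_rainbow_connected V A c)"

end

theory Submission imports Defs begin

lemma arc_iff:
  assumes "0 < k" "k < n"
  shows "(i,j) \<in> circulant_arcs n {1..k} \<longleftrightarrow>
    i < n \<and> j < n \<and> 1 \<le> (int j - int i) mod int n \<and> (int j - int i) mod int n \<le> int k"
proof -
  have e: "\<And>s. s \<in> {1..k} \<Longrightarrow> int s mod int n = int s" using assms by auto
  show ?thesis
  proof
    assume "(i,j) \<in> circulant_arcs n {1..k}"
    then obtain s where "s \<in> {1..k}" "i<n" "j<n" "(int j - int i) mod int n = int s mod int n"
      unfolding circulant_arcs_def by auto
    then show "i < n \<and> j < n \<and> 1 \<le> (int j - int i) mod int n \<and> (int j - int i) mod int n \<le> int k"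
      using e by auto
  next
    assume h: "i < n \<and> j < n \<and> 1 \<le> (int j - int i) mod int n \<and> (int j - int i) mod int n \<le> int k"
    define s where "s = nat ((int j - int i) mod int n)"
    have "s \<in> {1..k}" using h s_def by auto
    moreover have "(int j - int i) mod int n = int s mod int n" using h e[OF \<open>s \<in> {1..k}\<close>] s_def by auto
    ultimately show "(i,j) \<in> circulant_arcs n {1..k}" using h unfolding circulant_arcs_def by auto
  qed
qed

lemma path_arcs_simps[simp]: "path_arcs [a] = []" "path_arcs (a#b#q) = (a,b) # path_arcs (b#q)"
  by (simp_all add: path_arcs_def)

definition fsum :: "nat \<Rightarrow> nat list \<Rightarrow> int" where
  "fsum n p = sum_list (map (\<lambda>(a,b). (int b - int a) mod int n) (path_arcs p))"

lemma fsum_simps[simp]: "fsum n [a] = 0" "fsum n (a#b#q) = (int b - int a) mod int n + fsum n (b#q)"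
  by (simp_all add: fsum_def)

lemma fsum_props:
  assumes "0 < k" "k < n" "set (path_arcs (a#p)) \<subseteq> circulant_arcs n {1..k}" "a < n"
  shows "(int a + fsum n (a#p)) mod int n = int (last (a#p)) \<and> fsum n (a#p) \<le> int k * int (length p)
     \<and> int (length p) \<le> fsum n (a#p)"
  using assms(3,4)
proof (induction p arbitrary: a)
  case Nil
  then show ?case by simp
next
  case (Cons b q)
  have ab: "(a,b) \<in> circulant_arcs n {1..k}" and r: "set (path_arcs (b#q)) \<subseteq> circulant_arcs n {1..k}"
    using Cons.prems by auto
  then have b: "b < n" and f1: "1 \<le> (int b - int a) mod int n" and f2: "(int b - int a) mod int n \<le> int k"
    using arc_iff[OF assms(1,2)] by auto
  note IH = Cons.IH[OF r b]
  have "(int a + fsum n (a#b#q)) mod int n = ((int a + (int b - int a) mod int n) mod int n + fsum n (b#q)) mod int n"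
    by (simp add: mod_add_left_eq add.assoc)
  also have "(int a + (int b - int a) mod int n) mod int n = int b"
    using b by (simp add: mod_add_right_eq)
  finally show ?case using IH f1 f2 by (simp add: algebra_simps)
qed

lemma fsum_forced:
  assumes "0 < k" "k < n" "set (path_arcs (a#p)) \<subseteq> circulant_arcs n {1..k}" "a < n"
    "fsum n (a#p) = int k * int (length p)"
  shows "\<forall>j \<le> length p. (a#p) ! j = (a + j*k) mod n"
  using assms(3,4,5)
proof (induction p arbitrary: a)
  case Nil
  then show ?case by simp
next
  case (Cons b q)
  have ab: "(a,b) \<in> circulant_arcs n {1..k}" and r: "set (path_arcs (b#q)) \<subseteq> circulant_arcs n {1..k}"
    using Cons.prems by auto
  then have b: "b < n" and f1: "1 \<le> (int b - int a) mod int n" and f2: "(int b - int a) mod int n \<le> int k"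
    using arc_iff[OF assms(1,2)] by auto
  have le: "fsum n (b#q) \<le> int k * int (length q)" using fsum_props[OF assms(1,2) r b] by simp
  have eq1: "(int b - int a) mod int n = int k" and eq2: "fsum n (b#q) = int k * int (length q)"
    using Cons.prems(3) le f2 by (auto simp: algebra_simps)
  have bk: "b = (a + k) mod n"
  proof -
    have "int b mod int n = (int a + int k) mod int n"
      using eq1 by (metis add.commute diff_add_cancel mod_add_left_eq)
    then have "int b = int ((a + k) mod n)" using b by (simp add: zmod_int)
    then show ?thesis by simp
  qed
  note IH = Cons.IH[OF r b eq2]
  show ?case
  proof (intro allI impI)
    fix j assume j: "j \<le> length (b#q)"
    show "(a#b#q) ! j = (a + j*k) mod n"
    proof (cases j)
      case 0 then show ?thesis using Cons.prems by simp
    next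
      case (Suc i)
      then have "(a#b#q) ! j = (b + i*k) mod n" using IH j by simp
      also have "\<dots> = ((a+k) mod n + i*k) mod n" using bk by simp
      also have "\<dots> = (a + k + i*k) mod n" by (rule mod_add_left_eq)
      also have "\<dots> = (a + j*k) mod n" using Suc by (simp add: algebra_simps)
      finally show ?thesis .
    qed
  qed
qed


lemma path_arcs_length: "length (path_arcs p) = length p - 1"
  by (simp add: path_arcs_def)

lemma path_arcs_nth: "j < length p - 1 \<Longrightarrow> path_arcs p ! j = (p ! j, p ! Suc j)"
  by (simp add: path_arcs_def nth_tl)

lemma rainbow_len:
  assumes "rainbow c p" "set (path_arcs p) \<subseteq> A" "arc_colouring A K c"
  shows "path_len p \<le> K"
proof -
  have d: "distinct (map c (path_arcs p))" using assms(1) by (simp add: rainbow_def)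
  have s: "set (map c (path_arcs p)) \<subseteq> {1..K}" using assms(2,3) by (auto simp: arc_colouring_def)
  have "path_len p = card (set (map c (path_arcs p)))"
    using distinct_card[OF d] by (simp add: path_len_def path_arcs_length)
  also have "\<dots> \<le> card {1..K}" using s by (intro card_mono) auto
  finally show ?thesis by simp
qed

lemma path_lb:
  assumes "0 < k" "k < n" "is_dipath {0..<n} (circulant_arcs n {1..k}) p x y"
  shows "\<exists>q. p = x # q \<and> (int y - int x) mod int n \<le> fsum n p \<and> fsum n p \<le> int k * int (path_len p)"
proof -
  from assms(3) have pn: "p \<noteq> []" "hd p = x" "last p = y" "set p \<subseteq> {0..<n}"
    "set (path_arcs p) \<subseteq> circulant_arcs n {1..k}" unfolding is_dipath_def by auto
  then obtain q where pq: "p = x # q" by (cases p) auto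
  have xn: "x < n" using pn pq by auto
  note fp = fsum_props[OF assms(1,2) pn(5)[unfolded pq] xn]
  have "fsum n p mod int n = (int y - int x) mod int n"
  proof -
    have "fsum n p mod int n = ((int x + fsum n p) - int x) mod int n" by simp
    also have "\<dots> = ((int x + fsum n p) mod int n - int x) mod int n" by (simp add: mod_diff_left_eq)
    also have "\<dots> = (int y - int x) mod int n" using fp pq pn(3) by simp
    finally show ?thesis .
  qed
  moreover have "0 \<le> fsum n p" using fp pq by auto
  then have "fsum n p mod int n \<le> fsum n p" by (rule zmod_le_nonneg_dividend)
  ultimately have "(int y - int x) mod int n \<le> fsum n p" by simp
  then show ?thesis using fp pq by (simp add: path_len_def)
qed


lemma back_step:
  assumes "2 \<le> n" "i < n"
  shows "(int ((i + n - 1) mod n) - int i) mod int n = int n - 1"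
proof -
  have "int ((i + n - 1) mod n) = (int i + int n - 1) mod int n"
    using assms by (simp add: zmod_int of_nat_diff)
  then have "(int ((i + n - 1) mod n) - int i) mod int n = ((int i + int n - 1) mod int n - int i) mod int n" by simp
  also have "\<dots> = (int i + int n - 1 - int i) mod int n" by (simp add: mod_diff_left_eq)
  also have "\<dots> = int n - 1"
  proof -
    have h: "int i + int n - 1 - int i = int n - 1" by simp
    show ?thesis unfolding h using assms by (intro mod_pos_pos_trivial) auto
  qed
  finally show ?thesis .
qed

lemma lower_bound:
  assumes n3: "3 \<le> n" and k1: "1 \<le> k" and kn: "k \<le> n - 2"
    and col: "arc_colouring (circulant_arcs n {1..k}) K c"
    and rc: "rainbow_connected {0..<n} (circulant_arcs n {1..k}) c"
  shows "n \<le> K * k"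
proof (rule ccontr)
  assume "\<not> n \<le> K * k"
  hence lt: "K * k < n" by simp
  have k0: "0 < k" and kln: "k < n" using assms by auto
  have key: "\<exists>p. is_dipath {0..<n} (circulant_arcs n {1..k}) p i ((i+n-1) mod n) \<and> rainbow c p
      \<and> path_len p = K \<and> K * k = n - 1 \<and> (\<forall>j \<le> K. p ! j = (i + j*k) mod n)" if i: "i < n" for i
  proof -
    define y where "y = (i + n - 1) mod n"
    have bs: "(int y - int i) mod int n = int n - 1" using back_step[of n i] n3 i y_def by simp
    have yn: "y < n" using y_def n3 by simp
    have yi: "y \<noteq> i" using bs n3 by auto
    have "\<exists>p. is_dipath {0..<n} (circulant_arcs n {1..k}) p i y \<and> rainbow c p"
      using rc i yn yi unfolding rainbow_connected_def by simp
    then obtain p where p: "is_dipath {0..<n} (circulant_arcs n {1..k}) p i y" "rainbow c p" by blast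
    obtain q where q: "p = i # q" "(int y - int i) mod int n \<le> fsum n p" "fsum n p \<le> int k * int (path_len p)"
      using path_lb[OF k0 kln p(1)] by blast
    have arcs: "set (path_arcs p) \<subseteq> circulant_arcs n {1..k}" using p(1) by (simp add: is_dipath_def)
    have lK: "path_len p \<le> K" using rainbow_len[OF p(2) arcs col] .
    have "int k * int (path_len p) \<le> int k * int K" using lK by (simp add: mult_left_mono)
    moreover have "int K * int k < int n" using lt by (metis of_nat_less_iff of_nat_mult)
    ultimately have e1: "int k * int (path_len p) = int n - 1" "int k * int K = int n - 1" "fsum n p = int k * int (path_len p)"
      using q bs by (auto simp: algebra_simps)
    hence "int k * int (path_len p) = int k * int K" by simp
    hence "path_len p = K" using k0 by simp
    moreover have "K * k = n - 1"
    proof -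
      have "int (K * k) = int (n - 1)" using e1(2) n3 by (simp add: of_nat_diff mult.commute)
      thus ?thesis by (simp only: of_nat_eq_iff)
    qed
    moreover have "\<forall>j \<le> K. p ! j = (i + j*k) mod n"
    proof -
      have lq: "length q = path_len p" using q by (simp add: path_len_def)
      have "fsum n (i#q) = int k * int (length q)" using e1 q lq by simp
      from fsum_forced[OF k0 kln arcs[unfolded q(1)] i this] show ?thesis using lq \<open>path_len p = K\<close> q by simp
    qed
    ultimately show ?thesis using p y_def by blast
  qed
  obtain p0 where "K * k = n - 1" using key[of 0] n3 by auto
  hence Kk: "K * k = n - 1" .
  have K2: "2 \<le> K"
  proof (rule ccontr)
    assume "\<not> 2 \<le> K" hence "K \<le> 1" by simp
    hence "K * k \<le> k" by simp
    thus False using Kk kn n3 by simp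
  qed
  define g where "g b = c ((b*k) mod n, (Suc b * k) mod n)" for b
  have W: "inj_on (\<lambda>j. g (a+j)) {..<K} \<and> (\<forall>j<K. g (a+j) \<in> {1..K})" for a
  proof -
    define i where "i = (a*k) mod n"
    have i: "i < n" using n3 i_def by simp
    obtain p where p: "is_dipath {0..<n} (circulant_arcs n {1..k}) p i ((i+n-1) mod n)" "rainbow c p"
      "path_len p = K" "\<forall>j \<le> K. p ! j = (i + j*k) mod n"
      using key[OF i] by blast
    have arcs: "set (path_arcs p) \<subseteq> circulant_arcs n {1..k}" using p(1) by (simp add: is_dipath_def)
    have lp: "length (path_arcs p) = K" using p(3) by (simp add: path_len_def path_arcs_length)
    have pj: "p ! j = ((a+j)*k) mod n" if "j \<le> K" for j
    proof -
      have "p ! j = ((a*k) mod n + j*k) mod n" using p(4) that i_def by simp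
      also have "\<dots> = (a*k + j*k) mod n" by (rule mod_add_left_eq)
      finally show ?thesis by (simp add: algebra_simps)
    qed
    have nth: "path_arcs p ! j = (((a+j)*k) mod n, (Suc (a+j)*k) mod n)" if "j < K" for j
    proof -
      have "j < length p - 1" using that p(3) by (simp add: path_len_def)
      then have "path_arcs p ! j = (p ! j, p ! Suc j)" by (rule path_arcs_nth)
      then show ?thesis using pj[of j] pj[of "Suc j"] that by simp
    qed
    have m: "map c (path_arcs p) = map (\<lambda>j. g (a+j)) [0..<K]"
      by (rule nth_equalityI) (auto simp: lp nth g_def)
    have "distinct (map c (path_arcs p))" using p(2) by (simp add: rainbow_def)
    hence "distinct (map (\<lambda>j. g (a+j)) [0..<K])" using m by simp
    hence inj: "inj_on (\<lambda>j. g (a+j)) {..<K}" by (simp add: distinct_map atLeast0LessThan)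
    have "\<forall>j<K. g (a+j) \<in> {1..K}"
    proof (intro allI impI)
      fix j assume j: "j < K"
      have "path_arcs p ! j \<in> set (path_arcs p)" using j lp by simp
      hence "c (path_arcs p ! j) \<in> {1..K}" using arcs col by (auto simp: arc_colouring_def)
      thus "g (a+j) \<in> {1..K}" using nth[OF j] by (simp add: g_def)
    qed
    with inj show ?thesis by simp
  qed
  have P: "g (a + K) = g a" for a
  proof -
    have sub: "(\<lambda>j. g (a+1+j)) ` {..<K} \<subseteq> {1..K}" using W[of "a+1"] by auto
    have "card ((\<lambda>j. g (a+1+j)) ` {..<K}) = K" using W[of "a+1"] by (simp add: card_image)
    hence img: "(\<lambda>j. g (a+1+j)) ` {..<K} = {1..K}" using card_subset_eq[OF _ sub] by simp
    have K0: "0 < K" using K2 by simp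
    have "g (a+0) \<in> {1..K}" using W[of a] K0 by blast
    hence "g a \<in> {1..K}" by simp
    hence "g a \<in> (\<lambda>j. g (a+1+j)) ` {..<K}" using img by simp
    then obtain j where j: "j < K" "g a = g (a+1+j)" by blast
    show ?thesis
    proof (cases "j + 1 < K")
      case True
      have "g (a+0) = g (a + (j+1))" using j by (simp add: ac_simps)
      hence "(0::nat) = j + 1" using W[of a] True inj_onD[of "\<lambda>j. g (a+j)" "{..<K}" 0 "j+1"] K2 by auto
      thus ?thesis by simp
    next
      case False
      hence "j = K - 1" using j by simp
      thus ?thesis using j K2 by simp
    qed
  qed
  have PK: "g (a + x*K) = g a" for a x
  proof (induction x)
    case 0 then show ?case by simp
  next
    case (Suc x)
    have "g (a + Suc x * K) = g ((a + x*K) + K)" by (simp add: algebra_simps)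
    also have "\<dots> = g (a + x*K)" by (rule P)
    finally show ?case using Suc by simp
  qed
  have Pn1: "g (b + n) = g b" for b
  proof -
    have "((b+n)*k) mod n = (b*k) mod n" by (simp add: algebra_simps)
    moreover have "(Suc (b+n)*k) mod n = (Suc b*k) mod n"
    proof -
      have e: "Suc (b+n)*k = Suc b * k + k*n" by (simp add: algebra_simps)
      show ?thesis by (simp only: e mod_mult_self1)
    qed
    ultimately show ?thesis by (simp add: g_def)
  qed
  have Pn: "g (b + y*n) = g b" for b y
  proof (induction y)
    case 0 then show ?case by simp
  next
    case (Suc y)
    have "g (b + Suc y * n) = g ((b + y*n) + n)" by (simp add: algebra_simps)
    also have "\<dots> = g (b + y*n)" by (rule Pn1)
    finally show ?case using Suc by simp
  qed
  have ar: "(n-k)*K = 1 + (K-1)*n"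
  proof -
    obtain r where r: "K = Suc r" using K2 by (cases K) auto
    have nn: "n = K*k + 1" using Kk n3 by simp
    have "n - k = r*k + 1" using nn r by simp
    thus ?thesis using nn r by (simp add: algebra_simps)
  qed
  have "g 1 = g 0"
  proof -
    have "g 1 = g (1 + (K-1)*n)" using Pn[of 1 "K-1"] by simp
    also have "\<dots> = g (0 + (n-k)*K)" using ar by simp
    also have "\<dots> = g 0" by (rule PK)
    finally show ?thesis .
  qed
  moreover have "g (0+0) \<noteq> g (0+1)" using W[of 0] K2 inj_onD[of "\<lambda>j. g (0+j)" "{..<K}" 0 1] by auto
  ultimately show False by simp
qed


lemma mod_neq_lemma: "a < (b::nat) \<Longrightarrow> b < a + n \<Longrightarrow> a mod n \<noteq> b mod n"
proof
  assume ab: "a < b" "b < a + n" and eq: "a mod n = b mod n"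
  then have "n dvd b - a" using mod_eq_dvd_iff_nat[of a b n] by simp
  moreover have "0 < b - a" "b - a < n" using ab by auto
  ultimately show False using nat_dvd_not_less by blast
qed

lemma mod_m_neq: "(a::nat) < b \<Longrightarrow> b < a + m \<Longrightarrow> a mod m \<noteq> b mod m"
  by (rule mod_neq_lemma)

lemma upper_path:
  fixes n k m x D :: nat
  assumes k0: "0 < k" and kn: "k < n" and mk: "n \<le> m * k" and xn: "x < n" and D1: "1 \<le> D" and Dn: "D < n"
  shows "\<exists>p. is_dipath {0..<n} (circulant_arcs n {1..k}) p x ((x + D) mod n)
            \<and> path_len p = (D + k - 1) div k \<and> rainbow (\<lambda>(u,v). u div k + 1) p"
proof -
  define d where "d = (D + k - 1) div k"
  define \<sigma> where "\<sigma> = d*k - D"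
  define e where "e = min \<sigma> (x mod k)"
  define w where "w j = (if j = 0 then x else min (x + j*k - e) (x + D))" for j
  have dm: "d * k + (D + k - 1) mod k = D + k - 1" unfolding d_def by (rule div_mult_mod_eq)
  have "(D + k - 1) mod k < k" using k0 by simp
  hence Ddk: "D \<le> d*k" using dm D1 by linarith
  have dkD: "d*k < D + k" using dm D1 by linarith
  have d1: "1 \<le> d"
  proof (rule ccontr)
    assume "\<not> 1 \<le> d" hence "d = 0" by simp
    thus False using Ddk D1 by simp
  qed
  have dk1: "(d-1)*k + k = d*k" using d1 by (metis Suc_diff_1 less_le_trans mult_Suc zero_less_one add.commute)
  have sk: "\<sigma> < k" using dkD Ddk \<sigma>_def by linarith
  have es: "e \<le> \<sigma>" and ex: "e \<le> x mod k" and ek: "e < k" using sk by (auto simp: e_def)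
  have w0: "w 0 = x" by (simp add: w_def)
  have wd: "w d = x + D" using d1 es \<sigma>_def Ddk by (simp add: w_def)
  have wmid: "w j = x + j*k - e" if "1 \<le> j" "j < d" for j
  proof -
    have "j*k \<le> (d-1)*k" using that by (intro mult_le_mono1) linarith
    hence "j*k < D" using dk1 dkD by linarith
    thus ?thesis using that by (simp add: w_def)
  qed
  have jk_ge: "k \<le> j*k" if "1 \<le> j" for j using that by simp
  have step: "w j < w (Suc j) \<and> w (Suc j) \<le> w j + k" if "j < d" for j
  proof (cases "j = 0")
    case True
    show ?thesis
    proof (cases "d = 1")
      case True
      hence "w 1 = x + D" using wd by simp
      thus ?thesis using \<open>j = 0\<close> D1 Ddk True w0 by simp
    next
      case False
      hence "w 1 = x + k - e" using wmid[of 1] d1 by simp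
      thus ?thesis using \<open>j = 0\<close> ek w0 by simp
    qed
  next
    case False
    have wj: "w j = x + j*k - e" using wmid[of j] False that by simp
    have "j*k \<le> (d-1)*k" using that by (intro mult_le_mono1) linarith
    hence jD: "j*k < D" using dk1 dkD by linarith
    have jk: "k \<le> j*k" using False by simp
    have "w (Suc j) = min (x + Suc j * k - e) (x + D)" by (simp add: w_def)
    thus ?thesis using wj jD jk ek k0 by (auto simp: min_def)
  qed
  have mono: "w i < w j" if "i < j" "j \<le> d" for i j
    using that
  proof (induction j)
    case 0 then show ?case by simp
  next
    case (Suc j)
    have s: "w j < w (Suc j)" using step[of j] Suc.prems by simp
    show ?case
    proof (cases "i = j")
      case True then show ?thesis using s by simp
    next
      case False
      then have "w i < w j" using Suc by simp
      then show ?thesis using s by simp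
    qed
  qed
  have wle: "w j \<le> x + D" if "j \<le> d" for j
  proof (cases "j = d")
    case True then show ?thesis using wd by simp
  next
    case False then show ?thesis using mono[of j d] that wd by simp
  qed
  have wge: "x \<le> w j" if "j \<le> d" for j
  proof (cases "j = 0")
    case True then show ?thesis using w0 by simp
  next
    case False then show ?thesis using mono[of 0 j] that w0 by simp
  qed
  define p where "p = map (\<lambda>j. w j mod n) [0..<Suc d]"
  have lenp: "length p = Suc d" by (simp add: p_def)
  have pnth: "p ! j = w j mod n" if "j \<le> d" for j
    using that by (simp add: p_def nth_map_upt del: upt_Suc)
  have hdp: "hd p = x" using xn w0 by (simp add: p_def hd_map del: upt_Suc)
  have lastp: "last p = (x + D) mod n"
  proof -
    have "p \<noteq> []" using lenp by auto
    hence "last p = p ! (length p - 1)" by (rule last_conv_nth)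
    hence "last p = p ! d" using lenp by simp
    thus ?thesis using pnth[of d] wd by simp
  qed
  have distp: "distinct p"
    unfolding p_def
  proof (rule iffD2[OF distinct_map], intro conjI)
    show "distinct [0..<Suc d]" by simp
    show "inj_on (\<lambda>j. w j mod n) (set [0..<Suc d])"
    proof (rule inj_onI)
      fix i j assume i: "i \<in> set [0..<Suc d]" and j: "j \<in> set [0..<Suc d]" and eq: "w i mod n = w j mod n"
      have id: "i \<le> d" "j \<le> d" using i j by auto
      show "i = j"
      proof (rule ccontr)
        assume "i \<noteq> j"
        then consider "i < j" | "j < i" by linarith
        then show False
        proof cases
          case 1
          have "w i < w j" using mono[OF 1] j by auto
          moreover have "w j < w i + n" using wle[OF id(2)] wge[OF id(1)] Dn by simp
          ultimately show False using mod_neq_lemma eq by blast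
        next
          case 2
          have "w j < w i" using mono[OF 2] i by auto
          moreover have "w i < w j + n" using wle[OF id(1)] wge[OF id(2)] Dn by simp
          ultimately show False using mod_neq_lemma eq by metis
        qed
      qed
    qed
  qed
  have setp: "set p \<subseteq> {0..<n}" using k0 kn by (auto simp: p_def)
  have pa_nth: "path_arcs p ! j = (w j mod n, w (Suc j) mod n)" if "j < d" for j
  proof -
    have "j < length p - 1" using that lenp by simp
    hence "path_arcs p ! j = (p ! j, p ! Suc j)" by (rule path_arcs_nth)
    thus ?thesis using pnth[of j] pnth[of "Suc j"] that by simp
  qed
  have lenpa: "length (path_arcs p) = d" using lenp by (simp add: path_arcs_length)
  have arcs: "set (path_arcs p) \<subseteq> circulant_arcs n {1..k}"
  proof
    fix a assume "a \<in> set (path_arcs p)"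
    then obtain j where j: "j < d" "a = path_arcs p ! j" using lenpa by (auto simp: in_set_conv_nth)
    have st: "w j < w (Suc j)" "w (Suc j) \<le> w j + k" using step[OF j(1)] by auto
    have "(int (w (Suc j) mod n) - int (w j mod n)) mod int n = (int (w (Suc j)) - int (w j)) mod int n"
      by (simp add: zmod_int mod_diff_eq)
    also have "\<dots> = int (w (Suc j)) - int (w j)"
      using st kn by (intro mod_pos_pos_trivial) auto
    finally have "(w j mod n, w (Suc j) mod n) \<in> circulant_arcs n {1..k}"
      using st arc_iff[OF k0 kn] kn by simp
    thus "a \<in> circulant_arcs n {1..k}" using j pa_nth by simp
  qed
  define r where "r P = (if P < n then P div k else m + (P - n) div k)" for P
  have colr: "(P mod n) div k = r P mod m" if "P < 2*n" for P
  proof (cases "P < n")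
    case True
    have "P div k < m" using True mk k0 by (simp add: div_less_iff_less_mult)
    thus ?thesis using True by (simp add: r_def)
  next
    case False
    have pm: "P mod n = P - n" using False that by (simp add: le_mod_geq)
    have "(P - n) div k < m" using False that mk k0 by (simp add: div_less_iff_less_mult)
    thus ?thesis using False pm by (simp add: r_def)
  qed
  have rank_step: "r P < r Q" if "P + k \<le> Q" "Q < 2*n" for P Q
  proof -
    consider "Q < n" | "P < n" "n \<le> Q" | "n \<le> P" by linarith
    then show ?thesis
    proof cases
      case 1
      have "(P + k) div k \<le> Q div k" using that by (simp add: div_le_mono)
      thus ?thesis using 1 that k0 by (simp add: r_def)
    next
      case 2
      have "P div k < m" using 2 mk k0 by (simp add: div_less_iff_less_mult)
      thus ?thesis using 2 by (simp add: r_def)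
    next
      case 3
      have "(P - n + k) div k \<le> (Q - n) div k" using that 3 by (intro div_le_mono) simp
      moreover have "(P - n + k) div k = (P - n) div k + 1" using k0 by simp
      ultimately have "(P - n) div k < (Q - n) div k" by linarith
      thus ?thesis using 3 that k0 by (simp add: r_def)
    qed
  qed
  have rank_first: "r P < r Q" if "P < n" "(P div k + 1) * k \<le> Q" "Q < 2*n" for P Q
  proof (cases "Q < n")
    case True
    have "(P div k + 1) * k div k \<le> Q div k" using that by (intro div_le_mono) simp
    thus ?thesis using True that k0 by (simp add: r_def)
  next
    case False
    have "P div k < m" using that mk k0 by (simp add: div_less_iff_less_mult)
    thus ?thesis using False that by (simp add: r_def)
  qed
  have rx: "r x = x div k" using xn by (simp add: r_def)
  have w2n: "w j < 2*n" if "j \<le> d" for j using wle[OF that] xn Dn by simp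
  have rsucc: "r (w j) < r (w (Suc j))" if "Suc j < d" for j
  proof (cases "j = 0")
    case True
    have "w 1 = x + k - e" using wmid[of 1] that True by simp
    moreover have "x div k * k + x mod k = x" by (rule div_mult_mod_eq)
    moreover have "(x div k + 1) * k = x div k * k + k" by simp
    ultimately have "(x div k + 1) * k \<le> w 1" using ex ek by linarith
    thus ?thesis using True rank_first[OF xn _ w2n[of 1]] that w0 by simp
  next
    case False
    have a: "w j = x + j*k - e" using wmid[of j] False that by simp
    have b: "w (Suc j) = x + Suc j * k - e" using wmid[of "Suc j"] that by simp
    have c: "k \<le> j*k" using False by simp
    have "w (Suc j) = w j + k" using a b c ek by (simp only: mult_Suc)
    thus ?thesis using rank_step[OF _ w2n[of "Suc j"]] that by simp
  qed
  have rmono: "r (w i) < r (w j)" if "i < j" "j < d" for i j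
    using that
  proof (induction j)
    case 0 then show ?case by simp
  next
    case (Suc j)
    have s: "r (w j) < r (w (Suc j))" using rsucc Suc.prems by simp
    show ?case
    proof (cases "i = j")
      case True then show ?thesis using s by simp
    next
      case False then show ?thesis using Suc s by simp
    qed
  qed
  have key: "w (d - 1) < n + x div k * k"
  proof (cases "d = 1")
    case True then show ?thesis using w0 xn by simp
  next
    case False
    have wl: "w (d-1) = x + (d-1)*k - e" using wmid[of "d-1"] False d1 by simp
    have xx: "x div k * k + x mod k = x" by (rule div_mult_mod_eq)
    have xm: "x mod k < k" using k0 by simp
    have "(d-1)*k \<ge> k" using False d1 by (simp add: jk_ge)
    show ?thesis
    proof (cases "e = x mod k")
      case True
      have "(d-1)*k < D" using dk1 dkD by linarith
      thus ?thesis using wl True xx Dn \<open>(d-1)*k \<ge> k\<close> ek by linarith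
    next
      case False
      hence "e = \<sigma>" by (auto simp: e_def min_def split: if_splits)
      thus ?thesis using wl xx xm Dn dk1 Ddk \<sigma>_def \<open>(d-1)*k \<ge> k\<close> ek by linarith
    qed
  qed
  have rbound: "r (w j) \<le> x div k + m - 1" if "j < d" for j
  proof -
    have wj: "w j < n + x div k * k"
    proof (cases "j = d - 1")
      case True then show ?thesis using key by simp
    next
      case False
      hence "j < d - 1" using that by simp
      hence "w j < w (d-1)" using mono[of j "d-1"] by simp
      then show ?thesis using key by simp
    qed
    show ?thesis
    proof (cases "w j < n")
      case True
      have "w j div k < m" using True mk k0 by (simp add: div_less_iff_less_mult)
      thus ?thesis using True by (simp add: r_def)
    next
      case False
      have "(w j - n) div k < x div k" using wj False k0 by (simp add: div_less_iff_less_mult)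
      thus ?thesis using False by (simp add: r_def)
    qed
  qed
  have rlow: "x div k \<le> r (w j)" if "j < d" for j
  proof (cases "j = 0")
    case True then show ?thesis using rx w0 by simp
  next
    case False then show ?thesis using rmono[of 0 j] that rx w0 by simp
  qed
  have colneq: "(w i mod n) div k \<noteq> (w j mod n) div k" if "i < j" "j < d" for i j
  proof -
    have "r (w i) < r (w j)" using rmono that by simp
    moreover have "r (w j) < r (w i) + m"
    proof -
      have m1: "1 \<le> m" using mk kn by (cases m) auto
      have "r (w j) \<le> x div k + m - 1" using rbound that by simp
      moreover have "x div k \<le> r (w i)" using rlow that by simp
      ultimately show ?thesis using m1 by linarith
    qed
    ultimately have "r (w i) mod m \<noteq> r (w j) mod m" by (rule mod_m_neq)
    thus ?thesis using colr[OF w2n[of i]] colr[OF w2n[of j]] that by simp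
  qed
  have mapc: "map (\<lambda>(u,v). u div k + 1) (path_arcs p) = map (\<lambda>j. (w j mod n) div k + 1) [0..<d]"
    by (rule nth_equalityI) (auto simp: lenpa pa_nth)
  have rb: "rainbow (\<lambda>(u,v). u div k + 1) p"
    unfolding rainbow_def mapc
  proof (rule iffD2[OF distinct_map], intro conjI)
    show "distinct [0..<d]" by simp
    show "inj_on (\<lambda>j. (w j mod n) div k + 1) (set [0..<d])"
    proof (rule inj_onI)
      fix i j assume i: "i \<in> set [0..<d]" and j: "j \<in> set [0..<d]"
        and eq: "(w i mod n) div k + 1 = (w j mod n) div k + 1"
      show "i = j"
      proof (rule ccontr)
        assume "i \<noteq> j"
        then consider "i < j" | "j < i" by linarith
        then show False
        proof cases
          case 1 then show False using colneq[of i j] i j eq by simp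
        next
          case 2 then show False using colneq[of j i] i j eq by simp
        qed
      qed
    qed
  qed
  have "is_dipath {0..<n} (circulant_arcs n {1..k}) p x ((x + D) mod n)"
    unfolding is_dipath_def using lenp hdp lastp distp setp arcs by auto
  moreover have "path_len p = d" using lenp by (simp add: path_len_def)
  ultimately show ?thesis using rb d_def by blast
qed


lemma strong_imp_rc: "strongly_rainbow_connected V A c \<Longrightarrow> rainbow_connected V A c"
  unfolding strongly_rainbow_connected_def rainbow_connected_def by blast

theorem theorem6:
  fixes n k :: nat
  assumes "n \<ge> 3" and "1 \<le> k" and "k \<le> n - 2"
  shows "rc_star (circulant_verts n) (circulant_arcs n {1..k}) = nat \<lceil>real n / real k\<rceil>
       \<and> src_star (circulant_verts n) (circulant_arcs n {1..k}) = nat \<lceil>real n / real k\<rceil>"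
proof -
  define m where "m = nat \<lceil>real n / real k\<rceil>"
  define A where "A = circulant_arcs n {1..k}"
  define V where "V = circulant_verts n"
  have V: "V = {0..<n}" by (simp add: V_def circulant_verts_def)
  have k0: "0 < k" and kn: "k < n" using assms by auto
  have kr: "0 < real k" using k0 by simp
  have c1: "real n / real k \<le> of_int \<lceil>real n / real k\<rceil>" by (rule le_of_int_ceiling)
  have c2: "of_int \<lceil>real n / real k\<rceil> - 1 < real n / real k" using ceiling_correct by blast
  have cpos: "0 \<le> \<lceil>real n / real k\<rceil>" using c1 kr
    by (metis ceiling_mono ceiling_zero divide_nonneg_nonneg of_nat_0_le_iff)
  have rm: "real m = of_int \<lceil>real n / real k\<rceil>" using cpos by (simp add: m_def)
  have "real n \<le> of_int \<lceil>real n / real k\<rceil> * real k" using c1 pos_divide_le_eq[OF kr] by blast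
  hence "real n \<le> real m * real k" using rm by simp
  hence mk: "n \<le> m * k" by (metis of_nat_le_iff of_nat_mult)
  have "(of_int \<lceil>real n / real k\<rceil> - 1) * real k < real n" using c2 pos_less_divide_eq[OF kr] by blast
  hence "(real m - 1) * real k < real n" using rm by simp
  hence mk2: "(m - 1) * k < n"
  proof -
    assume h: "(real m - 1) * real k < real n"
    have m1: "1 \<le> m" using mk kn by (cases m) auto
    have "real ((m - 1) * k) = (real m - 1) * real k" using m1 by (simp add: of_nat_diff)
    thus ?thesis using h by linarith
  qed
  define col where "col = (\<lambda>(u::nat, v::nat). u div k + 1)"
  have colA: "arc_colouring A m col"
    unfolding arc_colouring_def
  proof
    fix a assume "a \<in> A"
    then obtain u v where a: "a = (u,v)" "u < n" using arc_iff[OF k0 kn] A_def by (cases a) auto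
    have "u div k < m" using a mk k0 by (simp add: div_less_iff_less_mult)
    thus "col a \<in> {1..m}" using a by (simp add: col_def)
  qed
  have strong: "strongly_rainbow_connected V A col"
    unfolding strongly_rainbow_connected_def
  proof (intro ballI impI)
    fix x y assume x: "x \<in> V" and y: "y \<in> V" and xy: "x \<noteq> y"
    have xn: "x < n" and yn: "y < n" using x y V by auto
    define D where "D = (if x \<le> y then y - x else y + n - x)"
    have D1: "1 \<le> D" and Dn: "D < n" using xn yn xy by (auto simp: D_def)
    have xD: "(x + D) mod n = y" using xn yn by (auto simp: D_def)
    have iD: "(int y - int x) mod int n = int D"
    proof -
      have "(int y - int x) mod int n = (int x + int D - int x) mod int n"
      proof (cases "x \<le> y")
        case True then show ?thesis by (simp add: D_def of_nat_diff)
      next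
        case False
        have eq: "int x + int D - int x = (int y - int x) + int n" using False xn by (simp add: D_def of_nat_diff)
        show ?thesis unfolding eq by (simp only: mod_add_self2)
      qed
      also have "\<dots> = int D" using Dn by simp
      finally show ?thesis .
    qed
    from upper_path[OF k0 kn mk xn D1 Dn] obtain p where
      p0: "is_dipath {0..<n} (circulant_arcs n {1..k}) p x ((x + D) mod n)" "path_len p = (D + k - 1) div k"
        "rainbow (\<lambda>(u,v). u div k + 1) p" by blast
    have p: "is_dipath {0..<n} A p x y" "path_len p = (D + k - 1) div k" "rainbow col p"
      using p0 xD by (simp_all add: A_def col_def)
    have "didist V A x y = (D + k - 1) div k"
      unfolding didist_def
    proof (rule Least_equality)
      show "\<exists>p. is_dipath V A p x y \<and> path_len p = (D + k - 1) div k" using p V by auto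
    next
      fix l assume "\<exists>p. is_dipath V A p x y \<and> path_len p = l"
      then obtain q where q: "is_dipath {0..<n} A q x y" "path_len q = l" using V by auto
      have "int D \<le> int k * int l" using path_lb[OF k0 kn q(1)[unfolded A_def]] q(2) iD by auto
      hence "D \<le> k * l" by (metis of_nat_le_iff of_nat_mult)
      hence "D + k - 1 < (l + 1) * k" using k0 by (simp add: algebra_simps)
      hence "(D + k - 1) div k < l + 1" using k0 by (simp add: div_less_iff_less_mult)
      thus "(D + k - 1) div k \<le> l" by simp
    qed
    thus "\<exists>p. is_dipath V A p x y \<and> path_len p = didist V A x y \<and> rainbow col p"
      using p V by auto
  qed
  have ex: "\<exists>c. arc_colouring A m c \<and> strongly_rainbow_connected V A c" using colA strong by blast
  have src_le: "src_star V A \<le> m" unfolding src_star_def by (rule Least_le) (use ex in blast)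
  have rc_le: "rc_star V A \<le> m" unfolding rc_star_def by (rule Least_le) (use ex strong_imp_rc in blast)
  have low: "m \<le> K" if "arc_colouring A K c" "rainbow_connected V A c" for K c
  proof -
    have nK: "n \<le> K * k" using lower_bound[OF assms] that A_def V by simp
    show ?thesis
    proof (rule ccontr)
      assume "\<not> m \<le> K" hence "K \<le> m - 1" by simp
      hence "K*k \<le> (m-1)*k" by (rule mult_le_mono1)
      thus False using mk2 nK by linarith
    qed
  qed
  have rc_ge: "m \<le> rc_star V A"
  proof -
    have "\<exists>c. arc_colouring A (rc_star V A) c \<and> rainbow_connected V A c"
      unfolding rc_star_def by (rule LeastI_ex) (use ex strong_imp_rc in blast)
    thus ?thesis using low by blast
  qed
  have src_ge: "m \<le> src_star V A"
  proof -
    have "\<exists>c. arc_colouring A (src_star V A) c \<and> strongly_rainbow_connected V A c"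
      unfolding src_star_def by (rule LeastI_ex) (use ex in blast)
    thus ?thesis using low strong_imp_rc by blast
  qed
  have e1: "rc_star V A = m" using rc_le rc_ge by (rule antisym)
  have e2: "src_star V A = m" using src_le src_ge by (rule antisym)
  show ?thesis using e1 e2 unfolding m_def A_def V_def by blast
qed

end
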